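(* Let $m\ge1$ be an integer and $Q=\{-m,\dots,m\}^d\subset\mathbb{Z}^d$. Let $\Delta_Q=-2dP_Q+T_Q$ be the operator on $\mathbb{C}^Q$ with $(T_Q)_{x,y}=1$ if $x,y\in Q$ and $|x-y|_1=1$, and $0$ otherwise. Then for all $\beta>0$, $$\frac1{|Q|}\sum_{z\in Q}\big(\exp[\beta\Delta_Q]\big)_{z,z}\ \ge\ \frac{e^{-d\beta/m}}{(2\pi)^d}\int_{[-\pi,\pi]^d}\exp[-\beta\,\omega(k)]\,d^dk,$$ where $\omega(k)=\sum_{\nu=1}^d2\{1-\cos(k_\nu)\}$.
   Context: $|x-y|_1$ is the $\ell^1$ distance on $\mathbb{Z}^d$; $P_Q$ is the identity on $\mathbb{C}^Q$. *)

theory Defs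
  imports "HOL-Analysis.Analysis"
begin

text \<open>Points of Z^d are int^'n with d = CARD('n).\<close>

definition cubeQ :: "nat \<Rightarrow> (int ^ 'n) set" where
  "cubeQ m = {x. \<forall>i. \<bar>x $ i\<bar> \<le> int m}"

definition l1dist :: "int ^ 'n \<Rightarrow> int ^ 'n \<Rightarrow> int" where
  "l1dist x y = (\<Sum>i\<in>UNIV. \<bar>x $ i - y $ i\<bar>)"

definition lapQ :: "nat \<Rightarrow> int ^ 'n \<Rightarrow> int ^ 'n \<Rightarrow> real" where
  "lapQ m x y = (if x \<in> cubeQ m \<and> y \<in> cubeQ m then
      (if x = y then - 2 * real CARD('n) else 0) + (if l1dist x y = 1 then 1 else 0)
    else 0)"

fun matpow :: "'a set \<Rightarrow> ('a \<Rightarrow> 'a \<Rightarrow> real) \<Rightarrow> nat \<Rightarrow> 'a \<Rightarrow> 'a \<Rightarrow> real" where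
  "matpow S A 0 x y = (if x = y then 1 else 0)"
| "matpow S A (Suc n) x y = (\<Sum>w\<in>S. A x w * matpow S A n w y)"

definition matexp :: "'a set \<Rightarrow> ('a \<Rightarrow> 'a \<Rightarrow> real) \<Rightarrow> 'a \<Rightarrow> 'a \<Rightarrow> real" where
  "matexp S A x y = (\<Sum>n. matpow S A n x y / fact n)"

definition omega :: "real ^ 'n \<Rightarrow> real" where
  "omega k = (\<Sum>\<nu>\<in>UNIV. 2 * (1 - cos (k $ \<nu>)))"

end

theory Submission
  imports Defs
begin


definition qf :: "'a set \<Rightarrow> ('a \<Rightarrow> 'a \<Rightarrow> real) \<Rightarrow> ('a \<Rightarrow> real) \<Rightarrow> real" where
  "qf S M \<phi> = (\<Sum>x\<in>S. \<Sum>y\<in>S. \<phi> x * M x y * \<phi> y)"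

lemma matpow_add:
  assumes "finite S"
  shows "x \<in> S \<Longrightarrow> matpow S A (i + j) x y = (\<Sum>w\<in>S. matpow S A i x w * matpow S A j w y)"
proof (induction i arbitrary: x)
  case 0
  have "(\<Sum>w\<in>S. (if x = w then 1 else 0) * matpow S A j w y) = (\<Sum>w\<in>S. if x = w then matpow S A j w y else 0)"
    by (intro sum.cong) auto
  then show ?case using 0 by (simp add: sum.delta[OF assms] sum.delta'[OF assms])
next
  case (Suc i)
  have "matpow S A (Suc i + j) x y = (\<Sum>w\<in>S. A x w * matpow S A (i + j) w y)" by simp
  also have "\<dots> = (\<Sum>w\<in>S. A x w * (\<Sum>u\<in>S. matpow S A i w u * matpow S A j u y))"
    using Suc.IH by (intro sum.cong) auto
  also have "\<dots> = (\<Sum>w\<in>S. \<Sum>u\<in>S. A x w * (matpow S A i w u * matpow S A j u y))"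
    by (simp add: sum_distrib_left)
  also have "\<dots> = (\<Sum>u\<in>S. \<Sum>w\<in>S. A x w * (matpow S A i w u * matpow S A j u y))"
    by (rule sum.swap)
  also have "\<dots> = (\<Sum>u\<in>S. (\<Sum>w\<in>S. A x w * matpow S A i w u) * matpow S A j u y)"
    by (simp add: sum_distrib_right mult.assoc)
  finally show ?case by simp
qed

lemma matpow_Suc':
  assumes "finite S" "x \<in> S" "y \<in> S"
  shows "matpow S A (Suc n) x y = (\<Sum>w\<in>S. matpow S A n x w * A w y)"
proof -
  have "matpow S A (Suc n) x y = matpow S A (n + 1) x y" by simp
  also have "\<dots> = (\<Sum>w\<in>S. matpow S A n x w * matpow S A 1 w y)"
    by (rule matpow_add[OF assms(1,2)])
  also have "\<dots> = (\<Sum>w\<in>S. matpow S A n x w * A w y)"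
    using assms by (intro sum.cong) (auto simp: if_distrib sum.delta' cong: if_cong)
  finally show ?thesis .
qed

lemma matpow_sym:
  assumes "finite S" "\<And>x y. x \<in> S \<Longrightarrow> y \<in> S \<Longrightarrow> A x y = A y x"
  shows "x \<in> S \<Longrightarrow> y \<in> S \<Longrightarrow> matpow S A n x y = matpow S A n y x"
proof (induction n arbitrary: x y)
  case 0
  then show ?case by auto
next
  case (Suc n)
  have "matpow S A (Suc n) x y = (\<Sum>w\<in>S. A x w * matpow S A n w y)" by simp
  also have "\<dots> = (\<Sum>w\<in>S. matpow S A n y w * A w x)"
    using Suc assms(2) by (intro sum.cong) (auto simp: mult.commute)
  also have "\<dots> = matpow S A (Suc n) y x"
    using matpow_Suc'[OF assms(1) Suc.prems(2,1)] by simp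
  finally show ?case .
qed

lemma matpow_scale:
  "matpow S (\<lambda>x y. c * A x y) n x y = c ^ n * matpow S A n x y"
  by (induction n arbitrary: x y) (auto simp: sum_distrib_left algebra_simps)

lemma matpow_bound:
  assumes "finite S" "\<And>x y. x \<in> S \<Longrightarrow> y \<in> S \<Longrightarrow> \<bar>A x y\<bar> \<le> B"
  shows "x \<in> S \<Longrightarrow> \<bar>matpow S A n x y\<bar> \<le> (real (card S) * B) ^ n"
proof (induction n arbitrary: x)
  case 0
  then show ?case by auto
next
  case (Suc n)
  have B0: "0 \<le> B" using assms(2)[OF Suc.prems Suc.prems] by linarith
  have "\<bar>matpow S A (Suc n) x y\<bar> \<le> (\<Sum>w\<in>S. \<bar>A x w\<bar> * \<bar>matpow S A n w y\<bar>)"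
    by (simp add: abs_mult[symmetric] sum_abs)
  also have "\<dots> \<le> (\<Sum>w\<in>S. B * (real (card S) * B) ^ n)"
    using Suc assms(2) B0 by (intro sum_mono mult_mono) auto
  also have "\<dots> = (real (card S) * B) ^ Suc n" by (simp add: algebra_simps)
  finally show ?case .
qed

lemma matpow_bound_ex:
  assumes "finite S"
  shows "\<exists>K\<ge>0. \<forall>x\<in>S. \<forall>y. \<forall>n. \<bar>matpow S A n x y\<bar> \<le> K ^ n"
proof -
  define B where "B = (\<Sum>x\<in>S. \<Sum>y\<in>S. \<bar>A x y\<bar>)"
  have AB: "\<bar>A x y\<bar> \<le> B" if "x \<in> S" "y \<in> S" for x y
  proof -
    have "\<bar>A x y\<bar> \<le> (\<Sum>y\<in>S. \<bar>A x y\<bar>)"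
      using that assms by (intro member_le_sum) auto
    also have "\<dots> \<le> B" unfolding B_def
      using that assms by (intro member_le_sum[of x S "\<lambda>x. (\<Sum>y\<in>S. \<bar>A x y\<bar>)"]) (auto intro: sum_nonneg)
    finally show ?thesis .
  qed
  have "B \<ge> 0" unfolding B_def by (auto intro!: sum_nonneg)
  then show ?thesis using matpow_bound[OF assms AB] by (intro exI[of _ "real (card S) * B"]) auto
qed

lemma matexp_summable:
  assumes "finite S" "x \<in> S"
  shows "summable (\<lambda>n. \<bar>matpow S A n x y / fact n\<bar>)" "summable (\<lambda>n. matpow S A n x y / fact n)"
    "summable (\<lambda>n. \<bar>matpow S A n x y\<bar> / fact n)"
proof -
  obtain K where K: "K \<ge> 0" "\<And>x y n. x \<in> S \<Longrightarrow> \<bar>matpow S A n x y\<bar> \<le> K ^ n"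
    using matpow_bound_ex[OF assms(1)] by blast
  have "summable (\<lambda>n. inverse (fact n) * K ^ n)" by (rule summable_exp)
  moreover have "\<bar>matpow S A n x y / fact n\<bar> \<le> inverse (fact n) * K ^ n" for n
    using K(2)[OF assms(2)] by (simp add: divide_inverse abs_mult mult.commute mult_left_mono)
  ultimately show "summable (\<lambda>n. \<bar>matpow S A n x y / fact n\<bar>)"
    by (intro summable_rabs_comparison_test) auto
  then show "summable (\<lambda>n. matpow S A n x y / fact n)"
    by (rule summable_rabs_cancel)
  show "summable (\<lambda>n. \<bar>matpow S A n x y\<bar> / fact n)"
    using \<open>summable (\<lambda>n. \<bar>matpow S A n x y / fact n\<bar>)\<close> by (simp add: abs_divide)
qed

lemma matexp_sym:
  assumes "finite S" "\<And>x y. x \<in> S \<Longrightarrow> y \<in> S \<Longrightarrow> A x y = A y x" "x \<in> S" "y \<in> S"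
  shows "matexp S A x y = matexp S A y x"
  unfolding matexp_def using matpow_sym[OF assms(1,2) assms(3,4)] by simp

lemma binom_inv_sum:
  "(\<Sum>i\<le>n. 1 / (fact i * fact (n - i)) :: real) = 2 ^ n / fact n"
proof -
  have "(\<Sum>i\<le>n. 1 / (fact i * fact (n - i)) :: real) = (\<Sum>i\<le>n. real (n choose i) / fact n)"
    by (intro sum.cong) (auto simp: binomial_fact field_simps)
  also have "\<dots> = real (\<Sum>i\<le>n. n choose i) / fact n"
    by (simp add: sum_divide_distrib)
  also have "\<dots> = 2 ^ n / fact n" by (simp add: choose_row_sum)
  finally show ?thesis .
qed

lemma matexp_square:
  assumes "finite S" "x \<in> S" "y \<in> S"
  shows "(\<Sum>w\<in>S. matexp S B x w * matexp S B w y) = matexp S (\<lambda>x y. 2 * B x y) x y"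
proof -
  let ?P = "matpow S B"
  have "(\<Sum>w\<in>S. matexp S B x w * matexp S B w y)
      = (\<Sum>w\<in>S. \<Sum>n. \<Sum>i\<le>n. ?P i x w / fact i * (?P (n - i) w y / fact (n - i)))"
    unfolding matexp_def
    using assms by (intro sum.cong refl Cauchy_product) (auto intro: matexp_summable)
  also have "\<dots> = (\<Sum>n. \<Sum>w\<in>S. \<Sum>i\<le>n. ?P i x w / fact i * (?P (n - i) w y / fact (n - i)))"
    using assms by (intro suminf_sum[symmetric] summable_Cauchy_product) (auto intro: matexp_summable)
  also have "\<dots> = (\<Sum>n. matpow S (\<lambda>x y. 2 * B x y) n x y / fact n)"
  proof (intro suminf_cong)
    fix n
    have "(\<Sum>w\<in>S. \<Sum>i\<le>n. ?P i x w / fact i * (?P (n - i) w y / fact (n - i)))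
        = (\<Sum>i\<le>n. (\<Sum>w\<in>S. ?P i x w * ?P (n - i) w y) / (fact i * fact (n - i)))"
      by (subst sum.swap) (simp add: sum_divide_distrib mult_ac)
    also have "\<dots> = (\<Sum>i\<le>n. ?P n x y * (1 / (fact i * fact (n - i))))"
    proof (intro sum.cong refl)
      fix i assume "i \<in> {..n}"
      then have "?P n x y = ?P (i + (n - i)) x y" by simp
      also have "\<dots> = (\<Sum>w\<in>S. ?P i x w * ?P (n - i) w y)"
        by (rule matpow_add[OF assms(1,2)])
      finally have eq: "?P n x y = (\<Sum>w\<in>S. ?P i x w * ?P (n - i) w y)" .
      show "(\<Sum>w\<in>S. ?P i x w * ?P (n - i) w y) / (fact i * fact (n - i)) = ?P n x y * (1 / (fact i * fact (n - i)))"
        by (simp only: eq times_divide_eq_right mult_1_right)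
    qed
    also have "\<dots> = ?P n x y * (2 ^ n / fact n)"
      by (simp only: sum_distrib_left[symmetric] binom_inv_sum)
    also have "\<dots> = matpow S (\<lambda>x y. 2 * B x y) n x y / fact n"
      by (simp add: matpow_scale)
    finally show "(\<Sum>w\<in>S. \<Sum>i\<le>n. ?P i x w / fact i * (?P (n - i) w y / fact (n - i)))
        = matpow S (\<lambda>x y. 2 * B x y) n x y / fact n" .
  qed
  finally show ?thesis unfolding matexp_def .
qed



lemma qf_matexp_sums:
  assumes "finite S"
  shows "(\<lambda>n. qf S (matpow S A n) \<phi> / fact n) sums qf S (matexp S A) \<phi>"
proof -
  have "(\<lambda>n. \<Sum>x\<in>S. \<Sum>y\<in>S. \<phi> x * (matpow S A n x y / fact n) * \<phi> y) sums
        (\<Sum>x\<in>S. \<Sum>y\<in>S. \<phi> x * matexp S A x y * \<phi> y)"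
    unfolding matexp_def using assms
    by (intro sums_sum sums_mult sums_mult2 summable_sums matexp_summable) auto
  moreover have "(\<Sum>x\<in>S. \<Sum>y\<in>S. \<phi> x * (matpow S A n x y / fact n) * \<phi> y) = qf S (matpow S A n) \<phi> / fact n" for n
    unfolding qf_def by (simp add: sum_divide_distrib)
  ultimately show ?thesis unfolding qf_def by simp
qed

lemma qf_bound:
  assumes "finite S" "\<And>x y. x \<in> S \<Longrightarrow> \<bar>M x y\<bar> \<le> b"
  shows "\<bar>qf S M \<phi>\<bar> \<le> b * (\<Sum>x\<in>S. \<bar>\<phi> x\<bar>)\<^sup>2"
proof -
  have "\<bar>qf S M \<phi>\<bar> \<le> (\<Sum>x\<in>S. \<Sum>y\<in>S. \<bar>\<phi> x\<bar> * \<bar>M x y\<bar> * \<bar>\<phi> y\<bar>)"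
    unfolding qf_def by (rule order.trans[OF sum_abs sum_mono], rule order.trans[OF sum_abs])
      (simp add: abs_mult)
  also have "\<dots> \<le> (\<Sum>x\<in>S. \<Sum>y\<in>S. \<bar>\<phi> x\<bar> * b * \<bar>\<phi> y\<bar>)"
    using assms(2) by (intro sum_mono mult_right_mono mult_left_mono) auto
  also have "\<dots> = b * (\<Sum>x\<in>S. \<bar>\<phi> x\<bar>)\<^sup>2"
    by (simp add: power2_eq_square sum_distrib_left sum_distrib_right algebra_simps)
  finally show ?thesis .
qed

lemma qf_matpow0:
  assumes "finite S" shows "qf S (matpow S A 0) \<phi> = (\<Sum>x\<in>S. (\<phi> x)\<^sup>2)"
proof -
  have "qf S (matpow S A 0) \<phi> = (\<Sum>x\<in>S. \<Sum>y\<in>S. if y = x then \<phi> x * \<phi> y else 0)"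
    unfolding qf_def by (intro sum.cong) auto
  also have "\<dots> = (\<Sum>x\<in>S. (\<phi> x)\<^sup>2)" using assms by (simp add: power2_eq_square)
  finally show ?thesis .
qed

lemma qf_matpow1:
  assumes "finite S" shows "qf S (matpow S A 1) \<phi> = qf S A \<phi>"
proof -
  have "matpow S A 1 x y = A x y" if "y \<in> S" for x y
  proof -
    have "matpow S A 1 x y = (\<Sum>w\<in>S. if w = y then A x w else 0)"
      by (auto intro!: sum.cong)
    then show ?thesis using assms that by simp
  qed
  then show ?thesis unfolding qf_def by (intro sum.cong) auto
qed

lemma qf_zero:
  assumes "\<And>x. x \<in> S \<Longrightarrow> \<phi> x = 0" shows "qf S M \<phi> = 0"
  unfolding qf_def using assms by simp

lemma jensen_matexp:
  fixes \<phi> :: "'a \<Rightarrow> real"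
  assumes S: "finite S" and sym: "\<And>x y. x \<in> S \<Longrightarrow> y \<in> S \<Longrightarrow> A x y = A y x"
  defines "r \<equiv> (\<Sum>x\<in>S. (\<phi> x)\<^sup>2)"
  shows "qf S (matexp S A) \<phi> \<ge> r * exp (qf S A \<phi> / r)"
proof (cases "r = 0")
  case True
  then have "\<phi> x = 0" if "x \<in> S" for x
    using that S unfolding r_def by (subst (asm) sum_nonneg_eq_0_iff) auto
  then show ?thesis using True qf_zero[of S \<phi>] by simp
next
  case False
  have r0: "r > 0" using False unfolding r_def by (metis less_eq_real_def sum_nonneg zero_le_power2)
  define B where "B j = (\<lambda>x y. (1 / 2 ^ j) * A x y)" for j :: nat
  define g where "g j = qf S (matexp S (B j)) \<phi>" for j
  define a where "a = qf S A \<phi> / r"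
  obtain K where K: "K \<ge> 0" "\<And>x y n. x \<in> S \<Longrightarrow> \<bar>matpow S A n x y\<bar> \<le> K ^ n"
    using matpow_bound_ex[OF S] by blast
  define C where "C = (\<Sum>x\<in>S. \<bar>\<phi> x\<bar>)\<^sup>2"
  have C0: "C \<ge> 0" unfolding C_def by simp
  define D where "D = C * exp K / r"
  have D0: "D \<ge> 0" unfolding D_def using C0 r0 by simp
  \<comment> \<open>Cauchy-Schwarz step\<close>
  have CS: "(g (Suc j))\<^sup>2 \<le> r * g j" for j
  proof -
    define E where "E = matexp S (B (Suc j))"
    have Esym: "E x y = E y x" if "x \<in> S" "y \<in> S" for x y
      unfolding E_def B_def using matexp_sym[OF S _ that] sym by auto
    define u where "u w = (\<Sum>y\<in>S. E w y * \<phi> y)" for w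
    have B2: "(\<lambda>x y. 2 * B (Suc j) x y) = B j" unfolding B_def by (auto simp: fun_eq_iff)
    have "g j = (\<Sum>x\<in>S. \<Sum>y\<in>S. \<phi> x * (\<Sum>w\<in>S. E x w * E w y) * \<phi> y)"
      unfolding g_def qf_def E_def using matexp_square[OF S, of _ _ "B (Suc j)"] B2
      by (intro sum.cong refl) auto
    also have "\<dots> = (\<Sum>x\<in>S. \<Sum>w\<in>S. \<Sum>y\<in>S. \<phi> x * E x w * (E w y * \<phi> y))"
      apply (simp add: sum_distrib_left sum_distrib_right mult_ac)
      by (rule sum.cong[OF refl], rule sum.swap)
    also have "\<dots> = (\<Sum>w\<in>S. \<Sum>x\<in>S. \<Sum>y\<in>S. \<phi> x * E x w * (E w y * \<phi> y))"
      by (rule sum.swap)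
    also have "\<dots> = (\<Sum>w\<in>S. (\<Sum>x\<in>S. \<phi> x * E x w) * (\<Sum>y\<in>S. E w y * \<phi> y))"
      by (simp add: sum_product)
    also have "\<dots> = (\<Sum>w\<in>S. (u w)\<^sup>2)"
    proof (intro sum.cong refl)
      fix w assume w: "w \<in> S"
      have "(\<Sum>x\<in>S. \<phi> x * E x w) = u w"
        unfolding u_def using Esym w by (intro sum.cong refl) (auto simp: mult.commute)
      then show "(\<Sum>x\<in>S. \<phi> x * E x w) * (\<Sum>y\<in>S. E w y * \<phi> y) = (u w)\<^sup>2"
        unfolding u_def by (simp add: power2_eq_square)
    qed
    finally have gj: "g j = (\<Sum>w\<in>S. (u w)\<^sup>2)" .
    have gs: "g (Suc j) = (\<Sum>x\<in>S. \<phi> x * u x)"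
      unfolding g_def qf_def E_def[symmetric] u_def by (simp add: sum_distrib_left mult.assoc)
    show ?thesis unfolding gs gj r_def by (rule Cauchy_Schwarz_ineq_sum)
  qed
  define h where "h j = g j / r" for j
  have hstep: "(h (Suc j))\<^sup>2 \<le> h j" for j
    using CS[of j] r0 unfolding h_def by (simp add: power_divide field_simps power2_eq_square)
  have hpow: "h j ^ (2 ^ j) \<le> h 0" for j
  proof (induction j)
    case 0 then show ?case by simp
  next
    case (Suc j)
    have "h (Suc j) ^ (2 ^ Suc j) = ((h (Suc j))\<^sup>2) ^ (2 ^ j)"
      by (simp add: power_mult[symmetric] mult.commute)
    also have "\<dots> \<le> h j ^ (2 ^ j)" by (intro power_mono hstep) simp
    finally show ?case using Suc by simp
  qed
  have hlow: "h j \<ge> 1 + (1 / 2 ^ j) * a - (1 / 2 ^ j)\<^sup>2 * D" for j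
  proof -
    define t :: real where "t = 1 / 2 ^ j"
    have t0: "t > 0" "t \<le> 1" unfolding t_def by auto
    define q where "q n = qf S (matpow S A n) \<phi>" for n
    define f where "f n = t ^ n * q n / fact n" for n
    have "B j = (\<lambda>x y. t * A x y)" unfolding B_def t_def by simp
    then have qB: "qf S (matpow S (B j) n) \<phi> = t ^ n * q n" for n
      unfolding q_def qf_def by (simp add: matpow_scale sum_distrib_left algebra_simps)
    have fs: "f sums g j" unfolding g_def f_def using qf_matexp_sums[OF S, of "B j" \<phi>] qB by simp
    have q0: "q 0 = r" unfolding q_def r_def by (rule qf_matpow0[OF S])
    have q1: "q 1 = a * r" unfolding q_def a_def using qf_matpow1[OF S] r0 by simp
    have fs2: "(\<lambda>n. f (n + 2)) sums (g j - (r + t * (a * r)))"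
      using sums_split_initial_segment[OF fs, of 2] q0 q1 unfolding f_def
      by (simp add: numeral_2_eq_2)
    define e where "e n = C * (K ^ (n + 2) / fact (n + 2))" for n
    have es: "e sums (C * (exp K - (1 + K)))"
      unfolding e_def using sums_mult[OF sums_split_initial_segment[OF exp_converges[of K], of 2], of C]
      by (simp add: numeral_2_eq_2 divide_inverse mult.commute)
    have qb: "\<bar>q n\<bar> \<le> K ^ n * C" for n
      unfolding q_def C_def by (rule qf_bound[OF S K(2)])
    have fb: "\<bar>f (n + 2)\<bar> \<le> t\<^sup>2 * e n" for n
    proof -
      have "\<bar>f (n + 2)\<bar> = t ^ (n + 2) * \<bar>q (n + 2)\<bar> / fact (n + 2)"
        unfolding f_def using t0 by (simp add: abs_mult)
      also have "\<dots> \<le> t\<^sup>2 * (K ^ (n + 2) * C) / fact (n + 2)"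
      proof (intro divide_right_mono mult_mono qb)
        have "t ^ n \<le> 1" using t0 by (simp add: power_le_one)
        then have "t\<^sup>2 * t ^ n \<le> t\<^sup>2 * 1" using t0 by (intro mult_left_mono) auto
        then show "t ^ (n + 2) \<le> t\<^sup>2" by (simp add: power_add power2_eq_square mult_ac)
      qed (use t0 in auto)
      also have "\<dots> = t\<^sup>2 * e n" unfolding e_def by simp
      finally show ?thesis .
    qed
    have "-(t\<^sup>2 * (C * (exp K - (1 + K)))) \<le> g j - (r + t * (a * r))"
    proof (rule sums_le[OF _ sums_minus[OF sums_mult[OF es, of "t\<^sup>2"]] fs2])
      fix n show "- (t\<^sup>2 * e n) \<le> f (n + 2)" using fb[of n] by (simp add: abs_le_iff)
    qed
    moreover have "C * (exp K - (1 + K)) \<le> C * exp K" using C0 K by (intro mult_left_mono) auto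
    ultimately have "g j \<ge> r + t * (a * r) - t\<^sup>2 * (C * exp K)"
      using mult_left_mono[of "C * (exp K - (1 + K))" "C * exp K" "t\<^sup>2"] by simp
    then have "g j / r \<ge> (r + t * (a * r) - t\<^sup>2 * (C * exp K)) / r"
      using r0 by (intro divide_right_mono) auto
    moreover have "(r + t * (a * r) - t\<^sup>2 * (C * exp K)) / r = 1 + t * a - t\<^sup>2 * D"
      unfolding D_def using r0 by (simp add: field_simps)
    ultimately show ?thesis unfolding h_def t_def by simp
  qed
  define E where "E = D + 2 * (\<bar>a\<bar> + D)\<^sup>2"
  define \<delta> where "\<delta> = 1 / (2 * (\<bar>a\<bar> + D) + 1)"
  have \<delta>0: "\<delta> > 0" unfolding \<delta>_def using D0 by simp
  obtain n0 where n0: "1 / \<delta> < 2 ^ n0" using real_arch_pow[of 2 "1 / \<delta>"] by auto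
  have ev: "exp (a - E * inverse (2 ^ j)) \<le> h 0" if "j \<ge> n0" for j
  proof -
    define t :: real where "t = 1 / 2 ^ j"
    have t0: "t > 0" "t \<le> 1" unfolding t_def by auto
    have "(2::real) ^ n0 \<le> 2 ^ j" using that by (intro power_increasing) auto
    then have "1 / \<delta> < 2 ^ j" using n0 by linarith
    then have "t < \<delta>" unfolding t_def using \<delta>0 by (simp add: field_simps)
    then have "t * (2 * (\<bar>a\<bar> + D) + 1) < 1" unfolding \<delta>_def using D0
      by (simp add: field_simps)
    then have tb: "t * (\<bar>a\<bar> + D) \<le> 1 / 2" using t0 by (simp add: algebra_simps)
    define y where "y = t * a - t\<^sup>2 * D"
    have "\<bar>y\<bar> \<le> \<bar>t * a\<bar> + \<bar>t\<^sup>2 * D\<bar>" unfolding y_def by (rule abs_triangle_ineq4)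
    also have "\<dots> = t * \<bar>a\<bar> + t\<^sup>2 * D" using t0 D0 by (simp add: abs_mult)
    also have "\<dots> \<le> t * (\<bar>a\<bar> + D)"
    proof -
      have "t * t \<le> t * 1" using t0 by (intro mult_left_mono) auto
      then have "D * (t * t) \<le> D * t" using D0 by (simp add: mult_left_mono)
      then show ?thesis by (simp add: algebra_simps power2_eq_square)
    qed
    finally have ya: "\<bar>y\<bar> \<le> t * (\<bar>a\<bar> + D)" .
    then have yb: "\<bar>y\<bar> \<le> 1 / 2" using tb by linarith
    have y1: "1 + y > 0" using yb by linarith
    have "(1 + y) ^ (2 ^ j) \<le> h j ^ (2 ^ j)"
      using hlow[of j] y1 unfolding y_def t_def by (intro power_mono) auto
    also have "\<dots> \<le> h 0" by (rule hpow)
    finally have h0: "(1 + y) ^ (2 ^ j) \<le> h 0" .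
    have ln1: "ln (1 + y) \<ge> y - 2 * y\<^sup>2" using abs_ln_one_plus_x_minus_x_bound[OF yb] by linarith
    have "(2 ^ j) * (y - 2 * y\<^sup>2) = a - t * D - 2 * t * (a - t * D)\<^sup>2"
      unfolding y_def t_def by (simp add: field_simps power2_eq_square)
    also have "\<dots> \<ge> a - t * E"
    proof -
      have "\<bar>a - t * D\<bar> \<le> \<bar>a\<bar> + \<bar>t * D\<bar>" by (rule abs_triangle_ineq4)
      moreover have "\<bar>t * D\<bar> \<le> D" using t0 D0 mult_left_le_one_le[of D t] by (simp add: abs_mult)
      ultimately have "\<bar>a - t * D\<bar> \<le> \<bar>a\<bar> + D" by linarith
      then have "(a - t * D)\<^sup>2 \<le> (\<bar>a\<bar> + D)\<^sup>2"
        by (metis abs_ge_zero power2_abs power_mono)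
      then have "t * D + 2 * t * (a - t * D)\<^sup>2 \<le> t * D + 2 * t * (\<bar>a\<bar> + D)\<^sup>2"
        using t0 by (simp add: mult_left_mono)
      then show ?thesis unfolding E_def by (simp add: algebra_simps)
    qed
    finally have aE: "a - t * E \<le> (2 ^ j) * (y - 2 * y\<^sup>2)" .
    have "(2 ^ j) * (y - 2 * y\<^sup>2) \<le> (2 ^ j) * ln (1 + y)"
      by (rule mult_left_mono[OF ln1]) simp
    with aE have "a - t * E \<le> 2 ^ j * ln (1 + y)" by linarith
    then have "a - t * E \<le> real (2 ^ j) * ln (1 + y)" by simp
    then have "exp (a - t * E) \<le> exp (real (2 ^ j) * ln (1 + y))" by simp
    also have "\<dots> = exp (ln (1 + y)) ^ (2 ^ j)" by (rule exp_of_nat_mult)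
    also have "\<dots> = (1 + y) ^ (2 ^ j)" using y1 by simp
    finally show ?thesis using h0 unfolding t_def by (simp add: divide_inverse mult.commute)
  qed
  have lim: "(\<lambda>j. exp (a - E * inverse (2 ^ j))) \<longlonglongrightarrow> exp (a - E * 0)"
    by (intro tendsto_intros LIMSEQ_inverse_realpow_zero) auto
  have "exp a \<le> h 0" using LIMSEQ_le_const2[OF lim] ev by auto
  moreover have "g 0 = qf S (matexp S A) \<phi>" unfolding g_def B_def by simp
  ultimately show ?thesis unfolding h_def a_def using r0 by (simp add: field_simps)
qed



definition nb :: "int ^ 'n \<Rightarrow> 'n \<Rightarrow> int \<Rightarrow> int ^ 'n" where
  "nb x \<nu> \<sigma> = (\<chi> i. if i = \<nu> then x $ i + \<sigma> else x $ i)"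

definition kv :: "real ^ 'n \<Rightarrow> int ^ 'n \<Rightarrow> real" where
  "kv k x = (\<Sum>i\<in>UNIV. k $ i * real_of_int (x $ i))"

lemma cubeQ_finite: "finite (cubeQ m :: (int ^ 'n) set)"
proof -
  have "cubeQ m \<subseteq> vec_lambda ` (PiE (UNIV :: 'n set) (\<lambda>_. {-int m..int m}))"
  proof
    fix x :: "int ^ 'n" assume "x \<in> cubeQ m"
    then have "(\<lambda>i. x $ i) \<in> PiE UNIV (\<lambda>_. {-int m..int m})" unfolding cubeQ_def by (auto simp: abs_le_iff) (metis minus_le_iff)
    moreover have "x = vec_lambda (\<lambda>i. x $ i)" by simp
    ultimately show "x \<in> vec_lambda ` (PiE UNIV (\<lambda>_. {-int m..int m}))" by blast
  qed
  moreover have "finite (PiE (UNIV :: 'n set) (\<lambda>_. {-int m..int m}))" by (intro finite_PiE) auto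
  ultimately show ?thesis using finite_subset by blast
qed

lemma cubeQ_zero: "0 \<in> cubeQ m" unfolding cubeQ_def by simp

lemma cubeQ_card_pos: "card (cubeQ m :: (int ^ 'n) set) > 0"
  using cubeQ_finite cubeQ_zero card_gt_0_iff by blast

lemma nb_comp: "nb x \<nu> \<sigma> $ i = (if i = \<nu> then x $ i + \<sigma> else x $ i)"
  unfolding nb_def by simp

lemma l1dist_nb: "\<sigma> \<in> {1, -1} \<Longrightarrow> l1dist x (nb x \<nu> \<sigma>) = 1"
proof -
  assume s: "\<sigma> \<in> {1, -1}"
  have "l1dist x (nb x \<nu> \<sigma>) = (\<Sum>i\<in>UNIV. if i = \<nu> then 1 else 0)"
    unfolding l1dist_def nb_comp using s by (intro sum.cong) auto
  then show ?thesis by simp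
qed

lemma l1dist_one_nb:
  assumes "l1dist x y = 1"
  shows "\<exists>\<nu> \<sigma>. \<sigma> \<in> {1, -1} \<and> y = nb x \<nu> \<sigma>"
proof -
  define d where "d i = \<bar>x $ i - y $ i\<bar>" for i
  have sd: "(\<Sum>i\<in>UNIV. d i) = 1" using assms unfolding l1dist_def d_def by simp
  have "\<exists>\<nu>. d \<nu> \<noteq> 0"
  proof (rule ccontr)
    assume "\<not> ?thesis" then have "(\<Sum>i\<in>UNIV. d i) = 0" by simp
    then show False using sd by simp
  qed
  then obtain \<nu> where \<nu>: "d \<nu> \<noteq> 0" by blast
  have d0: "d i \<ge> 0" for i unfolding d_def by simp
  have split: "(\<Sum>i\<in>UNIV. d i) = d \<nu> + (\<Sum>i\<in>UNIV - {\<nu>}. d i)"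
    by (simp add: sum.remove)
  have rest0: "(\<Sum>i\<in>UNIV - {\<nu>}. d i) \<ge> 0" using d0 by (simp add: sum_nonneg)
  have "d \<nu> \<ge> 1" using \<nu> d0[of \<nu>] by linarith
  then have dnu: "d \<nu> = 1" and rest: "(\<Sum>i\<in>UNIV - {\<nu>}. d i) = 0" using sd split rest0 by linarith+
  have others: "d i = 0" if "i \<noteq> \<nu>" for i
    using rest d0 that by (subst (asm) sum_nonneg_eq_0_iff) auto
  define \<sigma> where "\<sigma> = y $ \<nu> - x $ \<nu>"
  have "\<sigma> \<in> {1, -1}" using dnu unfolding d_def \<sigma>_def by (auto simp: abs_if split: if_splits)
  moreover have "y = nb x \<nu> \<sigma>"
    unfolding vec_eq_iff nb_comp \<sigma>_def using others unfolding d_def by auto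
  ultimately show ?thesis by blast
qed

lemma nb_inj:
  assumes "\<sigma> \<in> {1, -1}" "\<tau> \<in> {1, -1}" "nb x \<nu> \<sigma> = nb x \<mu> \<tau>"
  shows "\<nu> = \<mu> \<and> \<sigma> = \<tau>"
proof -
  have e: "nb x \<nu> \<sigma> $ i = nb x \<mu> \<tau> $ i" for i using assms(3) by simp
  show ?thesis
  proof (cases "\<nu> = \<mu>")
    case True
    then show ?thesis using e[of \<nu>] by (simp add: nb_comp)
  next
    case False
    then show ?thesis using e[of \<nu>] assms(1) by (auto simp: nb_comp)
  qed
qed

lemma sum_neighbors:
  fixes x :: "int ^ 'n" and S :: "(int ^ 'n) set"
  assumes S: "finite S"
  shows "(\<Sum>y\<in>S. if l1dist x y = 1 then g y else 0)
       = (\<Sum>\<nu>\<in>UNIV. \<Sum>\<sigma>\<in>{1, -1}. if nb x \<nu> \<sigma> \<in> S then g (nb x \<nu> \<sigma>) else 0)"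
proof -
  define P where "P = (UNIV :: 'n set) \<times> ({1, -1} :: int set)"
  define h where "h y = (if y \<in> S then g y else 0)" for y
  have inj: "inj_on (\<lambda>(\<nu>, \<sigma>). nb x \<nu> \<sigma>) P"
    unfolding P_def inj_on_def using nb_inj by fastforce
  have img: "(\<lambda>(\<nu>, \<sigma>). nb x \<nu> \<sigma>) ` P = {y. l1dist x y = 1}"
    unfolding P_def using l1dist_nb l1dist_one_nb by fastforce
  have finP: "finite P" unfolding P_def by simp
  have "(\<Sum>\<nu>\<in>UNIV. \<Sum>\<sigma>\<in>{1, -1}. h (nb x \<nu> \<sigma>)) = (\<Sum>(\<nu>, \<sigma>)\<in>P. h (nb x \<nu> \<sigma>))"
    unfolding P_def by (rule sum.cartesian_product)
  also have "\<dots> = (\<Sum>p\<in>P. h (case p of (\<nu>, \<sigma>) \<Rightarrow> nb x \<nu> \<sigma>))"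
    by (intro sum.cong) (auto split: prod.split)
  also have "\<dots> = (\<Sum>y\<in>{y. l1dist x y = 1}. h y)"
    using sum.reindex[OF inj, of h] img by (simp add: o_def case_prod_beta)
  also have "\<dots> = (\<Sum>y\<in>S. if l1dist x y = 1 then g y else 0)"
  proof -
    have fin: "finite {y. l1dist x y = 1}" using img finP by (metis finite_imageI)
    have "(\<Sum>y\<in>{y. l1dist x y = 1}. h y) = (\<Sum>y\<in>{y. l1dist x y = 1} \<inter> S. g y)"
      unfolding h_def using sum.inter_restrict[OF fin, of g S] by simp
    also have "\<dots> = (\<Sum>y\<in>S. if l1dist x y = 1 then g y else 0)"
      using sum.inter_restrict[OF S, of g "{y. l1dist x y = 1}"] by (simp add: Int_commute)
    finally show ?thesis .
  qed
  finally show ?thesis unfolding h_def by simp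
qed

lemma face_count:
  fixes \<nu> :: "'n::finite" and \<sigma> :: int
  assumes s: "\<sigma> \<in> {1, -1}"
  shows "(2 * m + 1) * card {x \<in> cubeQ m. nb x \<nu> \<sigma> \<notin> cubeQ m} \<le> card (cubeQ m :: (int ^ 'n) set)"
proof -
  define Q where "Q = (cubeQ m :: (int ^ 'n) set)"
  define F where "F = {x \<in> Q. x $ \<nu> = \<sigma> * int m}"
  define \<phi> where "\<phi> = (\<lambda>(j::nat, x::int ^ 'n). (\<chi> i. if i = \<nu> then x $ i - \<sigma> * int j else x $ i))"
  have finQ: "finite Q" unfolding Q_def by (rule cubeQ_finite)
  have finF: "finite F" unfolding F_def using finQ by simp
  have sub: "{x \<in> Q. nb x \<nu> \<sigma> \<notin> Q} \<subseteq> F"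
  proof
    fix x assume "x \<in> {x \<in> Q. nb x \<nu> \<sigma> \<notin> Q}"
    then have xQ: "x \<in> Q" and nQ: "nb x \<nu> \<sigma> \<notin> Q" by auto
    from nQ obtain i where i: "\<bar>nb x \<nu> \<sigma> $ i\<bar> > int m" unfolding Q_def cubeQ_def by (auto simp: not_le)
    have xb: "\<bar>x $ j\<bar> \<le> int m" for j using xQ unfolding Q_def cubeQ_def by auto
    have "i = \<nu>" using i xb[of i] by (auto simp: nb_comp split: if_splits)
    then have "\<bar>x $ \<nu> + \<sigma>\<bar> > int m" using i by (simp add: nb_comp)
    then have "x $ \<nu> = \<sigma> * int m" using xb[of \<nu>] s by (auto simp: abs_if split: if_splits)
    then show "x \<in> F" unfolding F_def using xQ by simp
  qed
  have inj: "inj_on \<phi> ({0..2 * m} \<times> F)"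
  proof (rule inj_onI)
    fix p q assume p: "p \<in> {0..2 * m} \<times> F" and q: "q \<in> {0..2 * m} \<times> F" and e: "\<phi> p = \<phi> q"
    obtain j x where pj: "p = (j, x)" by force
    obtain j' x' where qj: "q = (j', x')" by force
    have xF: "x $ \<nu> = \<sigma> * int m" "x' $ \<nu> = \<sigma> * int m" using p q pj qj unfolding F_def by auto
    have ei: "\<phi> p $ i = \<phi> q $ i" for i using e by simp
    have "\<sigma> * int m - \<sigma> * int j = \<sigma> * int m - \<sigma> * int j'"
      using ei[of \<nu>] xF unfolding pj qj \<phi>_def by simp
    then have "\<sigma> * int j = \<sigma> * int j'" by simp
    then have jj: "j = j'" using s by auto
    have "x $ i = x' $ i" for i
    proof (cases "i = \<nu>")
      case True then show ?thesis using xF by simp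
    next
      case False then show ?thesis using ei[of i] unfolding pj qj \<phi>_def by simp
    qed
    then show "p = q" unfolding pj qj jj by (simp add: vec_eq_iff)
  qed
  have img: "\<phi> ` ({0..2 * m} \<times> F) \<subseteq> Q"
  proof
    fix y assume "y \<in> \<phi> ` ({0..2 * m} \<times> F)"
    then obtain j x where j: "j \<le> 2 * m" and xF: "x \<in> F" and y: "y = \<phi> (j, x)" by auto
    have xb: "\<bar>x $ i\<bar> \<le> int m" for i using xF unfolding F_def Q_def cubeQ_def by auto
    have xn: "x $ \<nu> = \<sigma> * int m" using xF unfolding F_def by simp
    have "\<bar>y $ i\<bar> \<le> int m" for i
    proof (cases "i = \<nu>")
      case True
      then have "y $ i = \<sigma> * (int m - int j)" unfolding y \<phi>_def using xn by (simp add: algebra_simps)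
      then show ?thesis using s j by (auto simp: abs_mult)
    next
      case False
      then show ?thesis unfolding y \<phi>_def using xb by simp
    qed
    then show "y \<in> Q" unfolding Q_def cubeQ_def by simp
  qed
  have "card ({0..2 * m} \<times> F) \<le> card Q" by (rule card_inj_on_le[OF inj img finQ])
  then have "(2 * m + 1) * card F \<le> card Q" by (simp add: card_cartesian_product)
  moreover have "card {x \<in> Q. nb x \<nu> \<sigma> \<notin> Q} \<le> card F" by (rule card_mono[OF finF sub])
  ultimately show ?thesis unfolding Q_def[symmetric]
    by (meson dual_order.trans mult_le_mono2)
qed

lemma sum_if_card: "finite A \<Longrightarrow> (\<Sum>x\<in>A. if P x then 1 else 0 :: real) = real (card {x \<in> A. P x})"
proof -
  assume A: "finite A"
  have "(\<Sum>x\<in>A. if P x then 1 else 0 :: real) = (\<Sum>x\<in>A \<inter> {x. P x}. 1)"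
    using sum.inter_restrict[OF A, of "\<lambda>_. 1::real" "{x. P x}"] by simp
  also have "A \<inter> {x. P x} = {x \<in> A. P x}" by auto
  finally show ?thesis by simp
qed

lemma kv_nb: "kv k (nb x \<nu> \<sigma>) = kv k x + k $ \<nu> * real_of_int \<sigma>"
proof -
  have "kv k (nb x \<nu> \<sigma>) = (\<Sum>i\<in>UNIV. k $ i * real_of_int (x $ i) + (if i = \<nu> then k $ \<nu> * real_of_int \<sigma> else 0))"
    unfolding kv_def nb_comp by (intro sum.cong) (auto simp: algebra_simps)
  then show ?thesis unfolding kv_def by (simp add: sum.distrib)
qed

lemma aux_ineq:
  fixes Qr a c :: real and m :: nat
  assumes "m \<ge> 1" "(2 * real m + 1) * (2 * Qr - a) \<le> 2 * Qr" "a \<le> 2 * Qr" "\<bar>c\<bar> \<le> 1"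
  shows "c * a \<ge> 2 * Qr * c - Qr / real m"
proof -
  define \<delta> where "\<delta> = 2 * Qr - a"
  have d0: "\<delta> \<ge> 0" using assms(3) unfolding \<delta>_def by simp
  have Q0: "Qr \<ge> 0" using assms(2) d0 unfolding \<delta>_def[symmetric]
    by (smt (verit) mult_nonneg_nonneg of_nat_0_le_iff)
  have "\<delta> \<le> 2 * Qr / (2 * real m + 1)" using assms(2) unfolding \<delta>_def[symmetric]
    by (simp add: field_simps)
  also have "\<dots> \<le> Qr / real m" using assms(1) Q0 by (simp add: field_simps)
  finally have dQ: "\<delta> \<le> Qr / real m" .
  have "- (c * \<delta>) \<ge> - \<delta>"
  proof -
    have "c * \<delta> \<le> \<bar>c\<bar> * \<delta>" using d0 by (simp add: mult_right_mono)
    also have "\<dots> \<le> 1 * \<delta>" using d0 assms(4) by (intro mult_right_mono) auto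
    finally show ?thesis by simp
  qed
  moreover have "c * a = 2 * Qr * c - c * \<delta>" unfolding \<delta>_def by (simp add: algebra_simps)
  ultimately show ?thesis using dQ by linarith
qed



lemma cis_integral_1d:
  fixes n :: int
  shows "((\<lambda>t. cis (t * of_int n)) has_integral (if n = 0 then complex_of_real (2 * pi) else 0)) {-pi..pi}"
proof (cases "n = 0")
  case True
  have "((\<lambda>t. (1::complex)) has_integral (complex_of_real (2 * pi))) {-pi..pi}"
    using has_integral_const_real[of "1::complex" "-pi" pi] by (simp add: scaleR_conv_of_real)
  then show ?thesis using True by simp
next
  case False
  define c where "c = real_of_int n"
  have c0: "c \<noteq> 0" using False unfolding c_def by simp
  define F where "F t = cis (t * c) / (\<i> * of_real c)" for t
  have der: "(F has_vector_derivative cis (t * c)) (at t within {-pi..pi})" for t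
  proof -
    have "((\<lambda>t. t * c) has_derivative (\<lambda>s. s * c)) (at t within {-pi..pi})"
      by (intro derivative_eq_intros) auto
    then have "((\<lambda>t. cis (t * c)) has_derivative (\<lambda>s. (s * c) *\<^sub>R (\<i> * cis (t * c)))) (at t within {-pi..pi})"
      by (rule has_derivative_cis)
    then have "((\<lambda>t. cis (t * c) * (1 / (\<i> * of_real c))) has_derivative
        (\<lambda>s. (s * c) *\<^sub>R (\<i> * cis (t * c)) * (1 / (\<i> * of_real c)))) (at t within {-pi..pi})"
      by (rule has_derivative_mult_left)
    moreover have "(\<lambda>s. (s * c) *\<^sub>R (\<i> * cis (t * c)) * (1 / (\<i> * of_real c))) = (\<lambda>s. s *\<^sub>R cis (t * c))"
      using c0 by (auto simp: fun_eq_iff scaleR_conv_of_real field_simps)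
    ultimately show ?thesis unfolding has_vector_derivative_def F_def by simp
  qed
  have "((\<lambda>t. cis (t * c)) has_integral (F pi - F (-pi))) {-pi..pi}"
    by (rule fundamental_theorem_of_calculus) (use der in auto)
  moreover have "F pi = F (-pi)"
  proof -
    have "cis (-pi * c) * cis (2 * pi * c) = cis (pi * c)" by (simp add: cis_mult)
    moreover have "cis (2 * pi * c) = 1" unfolding c_def by (intro cis_multiple_2pi) simp
    ultimately show ?thesis unfolding F_def by simp
  qed
  ultimately show ?thesis using False unfolding c_def by simp
qed

lemma cis_lborel_1d:
  fixes n :: int
  shows "integrable lborel (\<lambda>t. indicator {-pi..pi} t *\<^sub>R cis (t * of_int n))"
    and "(\<integral>t. indicator {-pi..pi} t *\<^sub>R cis (t * of_int n) \<partial>lborel) = (if n = 0 then complex_of_real (2 * pi) else 0)"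
proof -
  show int: "integrable lborel (\<lambda>t. indicator {-pi..pi} t *\<^sub>R cis (t * of_int n))"
    by (intro borel_integrable_compact continuous_intros) auto
  define L where "L = (\<integral>t. indicator {-pi..pi} t *\<^sub>R cis (t * of_int n) \<partial>lborel)"
  have "((\<lambda>t. indicator {-pi..pi} t *\<^sub>R cis (t * of_int n)) has_integral L) UNIV"
    unfolding L_def by (rule has_integral_integral_lborel[OF int])
  moreover have "(\<lambda>t. indicator {-pi..pi} t *\<^sub>R cis (t * of_int n)) = (\<lambda>t. if t \<in> {-pi..pi} then cis (t * of_int n) else 0)"
    by (auto simp: fun_eq_iff indicator_def)
  ultimately have "((\<lambda>t. cis (t * of_int n)) has_integral L) {-pi..pi}"
    by (simp only: has_integral_restrict_UNIV)
  then show "(\<integral>t. indicator {-pi..pi} t *\<^sub>R cis (t * of_int n) \<partial>lborel) = (if n = 0 then complex_of_real (2 * pi) else 0)"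
    unfolding L_def[symmetric]
    using cis_integral_1d[of n] by (rule has_integral_unique)
qed

lemma integral_lborel_prod:
  fixes f :: "'a::euclidean_space \<Rightarrow> real \<Rightarrow> complex"
  assumes [measurable]: "\<And>b. b \<in> Basis \<Longrightarrow> f b \<in> borel_measurable borel"
  assumes int: "\<And>b. b \<in> Basis \<Longrightarrow> integrable lborel (f b)"
  shows "(\<integral>x. (\<Prod>b\<in>Basis. f b (x \<bullet> b)) \<partial>(lborel :: 'a measure)) = (\<Prod>b\<in>Basis. \<integral>x. f b x \<partial>lborel)"
proof -
  interpret finite_product_sigma_finite "\<lambda>_. lborel" "Basis :: 'a set" proof qed simp
  have "(\<integral>x. (\<Prod>b\<in>Basis. f b (x \<bullet> b)) \<partial>(lborel :: 'a measure))
      = (\<integral>y. (\<Prod>b\<in>Basis. f b ((\<Sum>b'\<in>Basis. y b' *\<^sub>R b') \<bullet> b)) \<partial>(\<Pi>\<^sub>M b\<in>Basis. lborel))"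
    by (subst lborel_eq) (rule integral_distr; measurable)
  also have "\<dots> = (\<integral>y. (\<Prod>b\<in>Basis. f b (y b)) \<partial>(\<Pi>\<^sub>M b\<in>Basis. lborel))"
  proof (intro Bochner_Integration.integral_cong refl prod.cong)
    fix y b assume "b \<in> (Basis :: 'a set)"
    then have "(\<Sum>b'\<in>Basis. y b' *\<^sub>R b') \<bullet> b = y b"
      by (simp add: inner_sum_left inner_Basis if_distrib sum.delta cong: if_cong)
    then show "f b ((\<Sum>b'\<in>Basis. y b' *\<^sub>R b') \<bullet> b) = f b (y b)" by simp
  qed
  also have "\<dots> = (\<Prod>b\<in>Basis. \<integral>x. f b x \<partial>lborel)"
    by (rule product_integral_prod) (auto intro: int)
  finally show ?thesis .
qed

lemma cis_sum: "finite I \<Longrightarrow> cis (\<Sum>i\<in>I. f i) = (\<Prod>i\<in>I. cis (f i))"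
  by (induction I rule: finite_induct) (auto simp: cis_mult[symmetric])

lemma Ints_floor_eq: "(x::real) \<in> \<int> \<Longrightarrow> of_int \<lfloor>x\<rfloor> = x"
  by (erule Ints_cases) simp

lemma orth_euclid:
  fixes R lo hi :: "'a::euclidean_space"
  assumes Rint: "\<And>b. b \<in> Basis \<Longrightarrow> R \<bullet> b \<in> \<int>"
    and lo: "\<And>b. b \<in> Basis \<Longrightarrow> lo \<bullet> b = -pi" and hi: "\<And>b. b \<in> Basis \<Longrightarrow> hi \<bullet> b = pi"
  shows "((\<lambda>k. cos (k \<bullet> R)) has_integral (if R = 0 then (2 * pi) ^ DIM('a) else 0)) (cbox lo hi)"
proof -
  define n where "n b = \<lfloor>R \<bullet> b\<rfloor>" for b
  have n: "R \<bullet> b = of_int (n b)" if "b \<in> Basis" for b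
    unfolding n_def using Ints_floor_eq[OF Rint[OF that]] by (simp only:)
  define G where "G k = indicator (cbox lo hi) k *\<^sub>R cis (k \<bullet> R)" for k
  have intG: "integrable lborel G" unfolding G_def
    by (intro borel_integrable_compact continuous_intros) auto
  define f where "f b t = indicator {-pi..pi} t *\<^sub>R cis (t * of_int (n b))" for b t
  have Gprod: "G k = (\<Prod>b\<in>Basis. f b (k \<bullet> b))" for k
  proof -
    have "cis (k \<bullet> R) = (\<Prod>b\<in>Basis. cis ((k \<bullet> b) * of_int (n b)))"
      by (subst euclidean_inner) (simp add: cis_sum n)
    moreover have "indicator (cbox lo hi) k = (\<Prod>b\<in>Basis. indicator {-pi..pi} (k \<bullet> b) :: real)"
    proof (cases "k \<in> cbox lo hi")
      case True
      then have "\<forall>b\<in>Basis. k \<bullet> b \<in> {-pi..pi}" using lo hi by (auto simp: mem_box)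
      then show ?thesis using True by (simp add: indicator_def)
    next
      case False
      then obtain b where "b \<in> Basis" "k \<bullet> b \<notin> {-pi..pi}" using lo hi by (auto simp: mem_box)
      then show ?thesis using False by (auto simp: indicator_def intro!: prod_zero)
    qed
    ultimately show ?thesis unfolding G_def f_def
      by (simp add: scaleR_conv_of_real prod.distrib)
  qed
  have fb: "integrable lborel (f b)" "(\<integral>t. f b t \<partial>lborel) = (if n b = 0 then complex_of_real (2 * pi) else 0)" for b
    unfolding f_def using cis_lborel_1d[of "n b"] by auto
  have "(\<integral>k. G k \<partial>lborel) = (\<Prod>b\<in>Basis. \<integral>t. f b t \<partial>lborel)"
    unfolding Gprod
  proof (rule integral_lborel_prod)
    fix b :: 'a
    show "integrable lborel (f b)" by (rule fb(1))
    then show "f b \<in> borel_measurable borel"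
      using borel_measurable_integrable[of lborel "f b"] by simp
  qed
  also have "\<dots> = (\<Prod>b\<in>(Basis::'a set). if n b = 0 then complex_of_real (2 * pi) else 0)"
    by (simp add: fb)
  also have "\<dots> = (if R = 0 then complex_of_real ((2 * pi) ^ DIM('a)) else 0)"
  proof (cases "R = 0")
    case True
    then have "n b = 0" if "b \<in> Basis" for b using n[OF that] by simp
    then show ?thesis using True by (simp add: prod_constant)
  next
    case False
    then obtain b where b: "b \<in> Basis" "R \<bullet> b \<noteq> 0" using euclidean_eq_iff[of R 0] by auto
    then have "n b \<noteq> 0" using n by auto
    then show ?thesis using False b by (auto intro!: prod_zero)
  qed
  finally have L: "(\<integral>k. G k \<partial>lborel) = (if R = 0 then complex_of_real ((2 * pi) ^ DIM('a)) else 0)" .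
  have "(G has_integral (\<integral>k. G k \<partial>lborel)) UNIV" by (rule has_integral_integral_lborel[OF intG])
  moreover have "G = (\<lambda>k. if k \<in> cbox lo hi then cis (k \<bullet> R) else 0)"
    unfolding G_def by (auto simp: fun_eq_iff indicator_def)
  ultimately have "((\<lambda>k. cis (k \<bullet> R)) has_integral (\<integral>k. G k \<partial>lborel)) (cbox lo hi)"
    by (simp only: has_integral_restrict_UNIV)
  from has_integral_linear[OF this bounded_linear_Re]
  have H: "((\<lambda>k. cos (k \<bullet> R)) has_integral Re (\<integral>k. G k \<partial>lborel)) (cbox lo hi)"
    by (simp add: o_def)
  have eqRe: "Re (if R = 0 then complex_of_real ((2 * pi) ^ DIM('a)) else 0) = (if R = 0 then (2 * pi) ^ DIM('a) else 0)"
    by simp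
  show ?thesis using H unfolding L eqRe .
qed



lemma card_partition_filter:
  "finite A \<Longrightarrow> card {x \<in> A. P x} + card {x \<in> A. \<not> P x} = card A"
proof -
  assume A: "finite A"
  have "card ({x \<in> A. P x} \<union> {x \<in> A. \<not> P x}) = card {x \<in> A. P x} + card {x \<in> A. \<not> P x}"
    using A by (intro card_Un_disjoint) auto
  moreover have "{x \<in> A. P x} \<union> {x \<in> A. \<not> P x} = A" by auto
  ultimately show ?thesis by simp
qed

lemma lap_sum_bound:
  fixes k :: "real ^ 'n" and m :: nat
  assumes m: "m \<ge> 1"
  shows "(\<Sum>x\<in>cubeQ m. \<Sum>y\<in>cubeQ m. lapQ m x y * cos (kv k x - kv k y))
         \<ge> real (card (cubeQ m :: (int ^ 'n) set)) * (- omega k - real CARD('n) / real m)"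
proof -
  define Q where "Q = (cubeQ m :: (int ^ 'n) set)"
  define d where "d = real CARD('n)"
  have finQ: "finite Q" unfolding Q_def by (rule cubeQ_finite)
  define I where "I x \<nu> = (if nb x \<nu> 1 \<in> Q then 1 else 0) + (if nb x \<nu> (-1) \<in> Q then 1 else (0::real))" for x \<nu>
  have row: "(\<Sum>y\<in>Q. lapQ m x y * cos (kv k x - kv k y)) = - 2 * d + (\<Sum>\<nu>\<in>UNIV. cos (k $ \<nu>) * I x \<nu>)"
    if xQ: "x \<in> Q" for x
  proof -
    have "(\<Sum>y\<in>Q. lapQ m x y * cos (kv k x - kv k y))
        = (\<Sum>y\<in>Q. (if x = y then - 2 * d else 0) + (if l1dist x y = 1 then cos (kv k x - kv k y) else 0))"
      unfolding lapQ_def using xQ by (intro sum.cong refl) (auto simp: Q_def d_def l1dist_def)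
    also have "\<dots> = - 2 * d + (\<Sum>y\<in>Q. if l1dist x y = 1 then cos (kv k x - kv k y) else 0)"
      using finQ xQ by (simp add: sum.distrib)
    also have "(\<Sum>y\<in>Q. if l1dist x y = 1 then cos (kv k x - kv k y) else 0)
        = (\<Sum>\<nu>\<in>UNIV. \<Sum>\<sigma>\<in>{1, -1}. if nb x \<nu> \<sigma> \<in> Q then cos (kv k x - kv k (nb x \<nu> \<sigma>)) else 0)"
      by (rule sum_neighbors[OF finQ])
    also have "\<dots> = (\<Sum>\<nu>\<in>UNIV. cos (k $ \<nu>) * I x \<nu>)"
      unfolding I_def by (intro sum.cong refl) (simp add: kv_nb algebra_simps)
    finally show ?thesis .
  qed
  have "(\<Sum>x\<in>Q. \<Sum>y\<in>Q. lapQ m x y * cos (kv k x - kv k y)) = (\<Sum>x\<in>Q. - 2 * d + (\<Sum>\<nu>\<in>UNIV. cos (k $ \<nu>) * I x \<nu>))"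
    using row by (intro sum.cong) auto
  also have "\<dots> = - 2 * d * real (card Q) + (\<Sum>\<nu>\<in>UNIV. cos (k $ \<nu>) * (\<Sum>x\<in>Q. I x \<nu>))"
    by (simp add: sum.distrib sum_subtractf sum_distrib_left sum.swap[of _ Q UNIV] mult.commute)
  finally have tot: "(\<Sum>x\<in>Q. \<Sum>y\<in>Q. lapQ m x y * cos (kv k x - kv k y))
      = - 2 * d * real (card Q) + (\<Sum>\<nu>\<in>UNIV. cos (k $ \<nu>) * (\<Sum>x\<in>Q. I x \<nu>))" .
  have each: "cos (k $ \<nu>) * (\<Sum>x\<in>Q. I x \<nu>) \<ge> 2 * real (card Q) * cos (k $ \<nu>) - real (card Q) / real m" for \<nu>
  proof -
    define p where "p \<sigma> = card {x \<in> Q. nb x \<nu> \<sigma> \<in> Q}" for \<sigma>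
    define n where "n \<sigma> = card {x \<in> Q. nb x \<nu> \<sigma> \<notin> Q}" for \<sigma>
    have pn: "p \<sigma> + n \<sigma> = card Q" for \<sigma> unfolding p_def n_def by (rule card_partition_filter[OF finQ])
    have fc: "(2 * m + 1) * n \<sigma> \<le> card Q" if "\<sigma> \<in> {1, -1}" for \<sigma>
      unfolding n_def Q_def by (rule face_count[OF that])
    have sI: "(\<Sum>x\<in>Q. I x \<nu>) = real (p 1) + real (p (-1))"
      unfolding I_def p_def by (simp add: sum.distrib sum_if_card[OF finQ])
    show ?thesis unfolding sI
    proof (rule aux_ineq[OF m])
      have "(2 * m + 1) * (n 1 + n (-1)) \<le> 2 * card Q" using fc[of 1] fc[of "-1"] by (simp add: algebra_simps)
      then have "real ((2 * m + 1) * (n 1 + n (-1))) \<le> real (2 * card Q)" by (simp only: of_nat_le_iff)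
      moreover have "2 * real (card Q) - (real (p 1) + real (p (- 1))) = real (n 1) + real (n (-1))"
        using pn[of 1] pn[of "-1"] by (simp add: algebra_simps flip: of_nat_add)
      ultimately show "(2 * real m + 1) * (2 * real (card Q) - (real (p 1) + real (p (- 1)))) \<le> 2 * real (card Q)"
        by (simp add: algebra_simps)
      show "real (p 1) + real (p (- 1)) \<le> 2 * real (card Q)"
        using pn[of 1] pn[of "-1"] by (simp flip: of_nat_add)
      show "\<bar>cos (k $ \<nu>)\<bar> \<le> 1" by simp
    qed
  qed
  have "(\<Sum>\<nu>\<in>UNIV. cos (k $ \<nu>) * (\<Sum>x\<in>Q. I x \<nu>)) \<ge> (\<Sum>\<nu>\<in>(UNIV::'n set). 2 * real (card Q) * cos (k $ \<nu>) - real (card Q) / real m)"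
    using each by (intro sum_mono) auto
  moreover have "(\<Sum>\<nu>\<in>(UNIV::'n set). 2 * real (card Q) * cos (k $ \<nu>) - real (card Q) / real m)
      = 2 * real (card Q) * (\<Sum>\<nu>\<in>UNIV. cos (k $ \<nu>)) - d * real (card Q) / real m"
    unfolding d_def by (simp add: sum_subtractf sum_distrib_left)
  ultimately have A: "(\<Sum>\<nu>\<in>UNIV. cos (k $ \<nu>) * (\<Sum>x\<in>Q. I x \<nu>)) \<ge> 2 * real (card Q) * (\<Sum>\<nu>\<in>UNIV. cos (k $ \<nu>)) - d * real (card Q) / real m"
    by linarith
  have om: "omega k = 2 * d - 2 * (\<Sum>\<nu>\<in>UNIV. cos (k $ \<nu>))"
    unfolding omega_def d_def by (simp add: sum_subtractf sum_distrib_left algebra_simps)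
  have B: "real (card Q) * (- omega k - d / real m) = - 2 * d * real (card Q) + (2 * real (card Q) * (\<Sum>\<nu>\<in>UNIV. cos (k $ \<nu>)) - d * real (card Q) / real m)"
    unfolding om by (simp add: algebra_simps)
  show ?thesis unfolding Q_def[symmetric] d_def[symmetric] tot B using A by linarith
qed

lemma qf_cos_sin:
  "qf S M (\<lambda>x. cos (\<theta> x)) + qf S M (\<lambda>x. sin (\<theta> x)) = (\<Sum>x\<in>S. \<Sum>y\<in>S. M x y * cos (\<theta> x - \<theta> y))"
  unfolding qf_def by (simp add: sum.distrib[symmetric] cos_diff algebra_simps)

lemma sum_cos_sin_sq:
  "(\<Sum>x\<in>S. (cos (\<theta> x))\<^sup>2) + (\<Sum>x\<in>S. (sin (\<theta> x))\<^sup>2) = real (card S)"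
  by (simp add: sum.distrib[symmetric])

lemma lapQ_sym: "lapQ m x y = lapQ m y x"
  unfolding lapQ_def l1dist_def by (auto simp: abs_minus_commute)

lemma exp_comb:
  fixes r1 r2 R \<alpha> \<gamma> :: real
  assumes "r1 \<ge> 0" "r2 \<ge> 0" "r1 + r2 = R" "R > 0" "r1 = 0 \<Longrightarrow> \<alpha> = 0" "r2 = 0 \<Longrightarrow> \<gamma> = 0"
  shows "r1 * exp (\<alpha> / r1) + r2 * exp (\<gamma> / r2) \<ge> R * exp ((\<alpha> + \<gamma>) / R)"
proof (cases "r1 = 0")
  case True
  then show ?thesis using assms by simp
next
  case r1: False
  show ?thesis
  proof (cases "r2 = 0")
    case True
    then show ?thesis using assms by simp
  next
    case r2: False
    define t where "t = r2 / R"
    have t: "0 \<le> t" "t \<le> 1" unfolding t_def using assms by (auto simp: field_simps)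
    have "exp ((1 - t) *\<^sub>R (\<alpha> / r1) + t *\<^sub>R (\<gamma> / r2)) \<le> (1 - t) * exp (\<alpha> / r1) + t * exp (\<gamma> / r2)"
      using convex_onD[OF exp_convex t, of "\<alpha> / r1" "\<gamma> / r2"] by simp
    moreover have "(1 - t) *\<^sub>R (\<alpha> / r1) + t *\<^sub>R (\<gamma> / r2) = (\<alpha> + \<gamma>) / R"
      unfolding t_def using assms r1 r2 by (auto simp: field_simps)
    moreover have "R * ((1 - t) * exp (\<alpha> / r1) + t * exp (\<gamma> / r2)) = r1 * exp (\<alpha> / r1) + r2 * exp (\<gamma> / r2)"
      unfolding t_def using assms by (auto simp: field_simps)
    ultimately show ?thesis using assms(4)
      by (metis mult_le_cancel_left_pos)
  qed
qed

lemma integrand_bound: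
  fixes k :: "real ^ 'n" and m :: nat and \<beta> :: real
  assumes m: "m \<ge> 1" and b: "\<beta> > 0"
  shows "(\<Sum>x\<in>cubeQ m. \<Sum>y\<in>cubeQ m. matexp (cubeQ m) (\<lambda>x y. \<beta> * lapQ m x y) x y * cos (kv k x - kv k y))
    \<ge> real (card (cubeQ m :: (int ^ 'n) set)) * (exp (- real CARD('n) * \<beta> / real m) * exp (- \<beta> * omega k))"
proof -
  define Q where "Q = (cubeQ m :: (int ^ 'n) set)"
  define A where "A = (\<lambda>x y :: int ^ 'n. \<beta> * lapQ m x y)"
  define c where "c x = cos (kv k x)" for x
  define s where "s x = sin (kv k x)" for x
  define rc where "rc = (\<Sum>x\<in>Q. (c x)\<^sup>2)"
  define rs where "rs = (\<Sum>x\<in>Q. (s x)\<^sup>2)"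
  have finQ: "finite Q" unfolding Q_def by (rule cubeQ_finite)
  have Qpos: "real (card Q) > 0" unfolding Q_def using cubeQ_card_pos by simp
  have symA: "A x y = A y x" for x y unfolding A_def using lapQ_sym[of m x y] by simp
  have J1: "qf Q (matexp Q A) c \<ge> rc * exp (qf Q A c / rc)"
    unfolding rc_def by (rule jensen_matexp[OF finQ symA])
  have J2: "qf Q (matexp Q A) s \<ge> rs * exp (qf Q A s / rs)"
    unfolding rs_def by (rule jensen_matexp[OF finQ symA])
  have rsum: "rc + rs = real (card Q)" unfolding rc_def rs_def c_def s_def by (rule sum_cos_sin_sq)
  have rc0: "rc \<ge> 0" "rs \<ge> 0" unfolding rc_def rs_def by (auto intro: sum_nonneg)
  have z1: "qf Q A c = 0" if "rc = 0"
  proof (rule qf_zero)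
    fix x assume "x \<in> Q" then show "c x = 0" using that finQ unfolding rc_def
      by (subst (asm) sum_nonneg_eq_0_iff) auto
  qed
  have z2: "qf Q A s = 0" if "rs = 0"
  proof (rule qf_zero)
    fix x assume "x \<in> Q" then show "s x = 0" using that finQ unfolding rs_def
      by (subst (asm) sum_nonneg_eq_0_iff) auto
  qed
  have comb: "rc * exp (qf Q A c / rc) + rs * exp (qf Q A s / rs) \<ge> real (card Q) * exp ((qf Q A c + qf Q A s) / real (card Q))"
    by (rule exp_comb[OF rc0 rsum Qpos z1 z2])
  have lhs: "(\<Sum>x\<in>Q. \<Sum>y\<in>Q. matexp Q A x y * cos (kv k x - kv k y)) = qf Q (matexp Q A) c + qf Q (matexp Q A) s"
    unfolding c_def s_def by (rule qf_cos_sin[symmetric])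
  have "qf Q A c + qf Q A s = \<beta> * (\<Sum>x\<in>Q. \<Sum>y\<in>Q. lapQ m x y * cos (kv k x - kv k y))"
    unfolding c_def s_def qf_cos_sin A_def by (simp add: sum_distrib_left mult.assoc)
  also have "\<dots> \<ge> \<beta> * (real (card Q) * (- omega k - real CARD('n) / real m))"
    unfolding Q_def using lap_sum_bound[OF m, of k] b by (intro mult_left_mono) auto
  finally have "(qf Q A c + qf Q A s) / real (card Q) \<ge> \<beta> * (- omega k - real CARD('n) / real m)"
    using Qpos by (simp add: field_simps)
  then have "exp ((qf Q A c + qf Q A s) / real (card Q)) \<ge> exp (- real CARD('n) * \<beta> / real m) * exp (- \<beta> * omega k)"
    by (simp add: exp_add[symmetric] algebra_simps)
  then have "real (card Q) * exp ((qf Q A c + qf Q A s) / real (card Q)) \<ge>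
      real (card Q) * (exp (- real CARD('n) * \<beta> / real m) * exp (- \<beta> * omega k))"
    using Qpos by (intro mult_left_mono) auto
  then show ?thesis unfolding Q_def[symmetric] A_def[symmetric] lhs using J1 J2 comb by linarith
qed

theorem lemma3p5:
  fixes m :: nat and \<beta> :: real
  assumes "m \<ge> 1" and "\<beta> > 0"
  shows "(1 / real (card (cubeQ m :: (int ^ 'n) set))) *
           (\<Sum>z\<in>(cubeQ m :: (int ^ 'n) set). matexp (cubeQ m) (\<lambda>x y. \<beta> * lapQ m x y) z z)
         \<ge> exp (- real CARD('n) * \<beta> / real m) / (2 * pi) ^ CARD('n) *
           integral (cbox (\<chi> i. - pi) (\<chi> i. pi)) (\<lambda>k :: real ^ 'n. exp (- \<beta> * omega k))"
proof -
  define Q where "Q = (cubeQ m :: (int ^ 'n) set)"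
  define M where "M = matexp Q (\<lambda>x y. \<beta> * lapQ m x y)"
  define C where "C = (2 * pi) ^ CARD('n)"
  define E where "E = exp (- real CARD('n) * \<beta> / real m)"
  define F where "F k = (\<Sum>x\<in>Q. \<Sum>y\<in>Q. M x y * cos (kv k x - kv k y))" for k :: "real ^ 'n"
  define J where "J k = exp (- \<beta> * omega k)" for k :: "real ^ 'n"
  define B where "B = (cbox (\<chi> i. - pi) (\<chi> i. pi) :: (real ^ 'n) set)"
  have finQ: "finite Q" unfolding Q_def by (rule cubeQ_finite)
  have Qpos: "real (card Q) > 0" unfolding Q_def using cubeQ_card_pos by simp
  have C0: "C > 0" unfolding C_def by simp
  define R where "R x y = (\<chi> i. real_of_int (x $ i - y $ i))" for x y :: "int ^ 'n"
  have kvR: "kv k x - kv k y = k \<bullet> R x y" for k x y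
    unfolding kv_def R_def inner_vec_def by (simp add: sum_subtractf algebra_simps)
  have orth: "((\<lambda>k. cos (k \<bullet> R x y)) has_integral (if x = y then C else 0)) B" for x y
  proof -
    have H: "((\<lambda>k. cos (k \<bullet> R x y)) has_integral (if R x y = 0 then (2 * pi) ^ DIM(real ^ 'n) else 0))
        (cbox (\<chi> i. - pi) (\<chi> i. pi))"
    proof (rule orth_euclid)
      fix b :: "real ^ 'n" assume "b \<in> Basis"
      then obtain i where bi: "b = axis i 1" unfolding Basis_vec_def by auto
      show "R x y \<bullet> b \<in> \<int>" unfolding bi R_def by (simp add: inner_axis)
      show "(\<chi> i. - pi) \<bullet> b = - pi" unfolding bi by (simp add: inner_axis)
      show "(\<chi> i. pi) \<bullet> b = pi" unfolding bi by (simp add: inner_axis)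
    qed
    have Req: "(R x y = 0) = (x = y)" unfolding R_def by (simp add: vec_eq_iff)
    have dim: "DIM(real ^ 'n) = CARD('n)" by simp
    show ?thesis using H unfolding B_def C_def dim Req .
  qed
  have intF: "(F has_integral (C * (\<Sum>z\<in>Q. M z z))) B"
  proof -
    have "((\<lambda>k. \<Sum>x\<in>Q. \<Sum>y\<in>Q. M x y * cos (k \<bullet> R x y)) has_integral
        (\<Sum>x\<in>Q. \<Sum>y\<in>Q. M x y * (if x = y then C else 0))) B"
      by (intro has_integral_sum finQ has_integral_mult_right orth)
    moreover have "(\<Sum>x\<in>Q. \<Sum>y\<in>Q. M x y * (if x = y then C else 0)) = C * (\<Sum>z\<in>Q. M z z)"
    proof -
      have "(\<Sum>x\<in>Q. \<Sum>y\<in>Q. M x y * (if x = y then C else 0)) = (\<Sum>x\<in>Q. M x x * C)"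
        using finQ by (intro sum.cong refl) (simp add: if_distrib sum.delta cong: if_cong)
      then show ?thesis by (simp add: sum_distrib_left mult.commute)
    qed
    moreover have "F = (\<lambda>k. \<Sum>x\<in>Q. \<Sum>y\<in>Q. M x y * cos (k \<bullet> R x y))"
      unfolding F_def kvR by simp
    ultimately show ?thesis by simp
  qed
  have intJ: "J integrable_on B"
    unfolding J_def omega_def B_def by (intro integrable_continuous continuous_intros)
  have intEJ: "((\<lambda>k. (real (card Q) * E) * J k) has_integral ((real (card Q) * E) * integral B J)) B"
    by (intro has_integral_mult_right integrable_integral intJ)
  have le: "(real (card Q) * E) * J k \<le> F k" for k
    using integrand_bound[OF assms, of k] unfolding F_def M_def Q_def E_def J_def by (simp add: mult.assoc)
  have "(real (card Q) * E) * integral B J \<le> C * (\<Sum>z\<in>Q. M z z)"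
    using has_integral_le[OF intEJ intF] le by blast
  then have "E / C * integral B J \<le> (1 / real (card Q)) * (\<Sum>z\<in>Q. M z z)"
    using Qpos C0 by (simp add: field_simps)
  then show ?thesis unfolding Q_def M_def C_def E_def J_def B_def by simp
qed


end
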